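(* Let $T$ be a tournament, let $P=x_0x_1\ldots x_r$ be a path of length $r$ in $T$, and let $z\in V(T)\setminus V(P)$ be a vertex such that every vertex of $\{x_{\alpha+1},x_{\alpha+2},\ldots,x_r\}$ dominates $z$ and $z$ dominates every vertex of $\{x_0,x_1,\ldots,x_\alpha\}$, where $\alpha\in[2,r-3]$. Assume that $T$ contains no $(x_0,x_r)$-path of length $r+1$ whose vertex set is $\{z\}\cup V(P)$. Suppose that $x_sx_t$ is an arc of $T$ with $s\in[\alpha,r-2]$ and $t\in[s+2,r]$, and let $k=\lfloor \frac{1}{2}(t-s)\rfloor$. Then no vertex of $\{x_0,x_1,\ldots,x_{\alpha-1}\}$ dominates a vertex of $\{x_{s+1},x_{s+2},\ldots,x_{s+k}\}$.
   Context: Paths are directed and simple; the length of a path is its number of arcs. A vertex $u$ dominates $v$ if $uv$ is an arc. $[a,b]$ denotes the integers from $a$ to $b$. *)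

theory Defs
  imports Main
begin

definition tournament :: "'a set \<Rightarrow> ('a \<Rightarrow> 'a \<Rightarrow> bool) \<Rightarrow> bool" where
  "tournament V A \<longleftrightarrow> finite V
     \<and> (\<forall>u v. A u v \<longrightarrow> u \<in> V \<and> v \<in> V)
     \<and> (\<forall>u. \<not> A u u)
     \<and> (\<forall>u\<in>V. \<forall>v\<in>V. u \<noteq> v \<longrightarrow> (A u v \<longleftrightarrow> \<not> A v u))"

text \<open>A directed simple path given by its vertex sequence; its length is
  (length of the list) - 1 arcs.\<close>
definition is_path :: "'a set \<Rightarrow> ('a \<Rightarrow> 'a \<Rightarrow> bool) \<Rightarrow> 'a list \<Rightarrow> bool" where
  "is_path V A ps \<longleftrightarrow> ps \<noteq> [] \<and> distinct ps \<and> set ps \<subseteq> V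
     \<and> (\<forall>i. Suc i < length ps \<longrightarrow> A (ps ! i) (ps ! Suc i))"

end

theory Submission
  imports Defs "HOL-Library.Multiset"
begin

fun ch :: "('a \<Rightarrow> 'a \<Rightarrow> bool) \<Rightarrow> 'a list \<Rightarrow> bool" where
  "ch A [] = True"
| "ch A [x] = True"
| "ch A (x # y # l) = (A x y \<and> ch A (y # l))"

lemma ch_iff: "ch A l \<longleftrightarrow> (\<forall>i. Suc i < length l \<longrightarrow> A (l ! i) (l ! Suc i))"
proof (induction A l rule: ch.induct)
  case (3 A x y l)
  show ?case
  proof
    assume "ch A (x # y # l)"
    then show "\<forall>i. Suc i < length (x # y # l) \<longrightarrow> A ((x # y # l) ! i) ((x # y # l) ! Suc i)"
      using 3 by (auto simp: nth_Cons split: nat.splits)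
  next
    assume h: "\<forall>i. Suc i < length (x # y # l) \<longrightarrow> A ((x # y # l) ! i) ((x # y # l) ! Suc i)"
    have "A x y" using h[rule_format, of 0] by simp
    moreover have "\<forall>i. Suc i < length (y # l) \<longrightarrow> A ((y # l) ! i) ((y # l) ! Suc i)"
      using h by (metis Suc_less_eq length_Cons nth_Cons_Suc)
    ultimately show "ch A (x # y # l)" using 3 by simp
  qed
qed auto

lemma ch_Cons: "ch A (x # l) = (ch A l \<and> (l \<noteq> [] \<longrightarrow> A x (hd l)))"
  by (cases l) auto

lemma ch_append: "ch A (a @ b) \<longleftrightarrow> ch A a \<and> ch A b \<and> (a \<noteq> [] \<and> b \<noteq> [] \<longrightarrow> A (last a) (hd b))"
  by (induction a) (auto simp: ch_Cons)

lemma ch_drop: "ch A xs \<Longrightarrow> ch A (drop m xs)"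
  by (simp add: ch_iff)

lemma ch_take: "ch A xs \<Longrightarrow> ch A (take m xs)"
  by (simp add: ch_iff)

lemma ch_seg: "ch A xs \<Longrightarrow> ch A (drop m (take n xs))"
  by (simp add: ch_drop ch_take)

lemma seg_ne: "m < n \<Longrightarrow> n \<le> length xs \<Longrightarrow> drop m (take n xs) \<noteq> []"
  by simp

lemma seg_hd: "m < n \<Longrightarrow> n \<le> length xs \<Longrightarrow> hd (drop m (take n xs)) = xs ! m"
  by (simp add: hd_drop_conv_nth)

lemma seg_last: "m < n \<Longrightarrow> n \<le> length xs \<Longrightarrow> last (drop m (take n xs)) = xs ! (n - 1)"
  by (simp add: last_conv_nth)

lemma split_take: "m \<le> n \<Longrightarrow> take n xs = take m xs @ drop m (take n xs)"
  by (metis min.absorb1 take_add take_drop le_add_diff_inverse drop_take)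

lemma construct:
  fixes V :: "'a set" and A :: "'a \<Rightarrow> 'a \<Rightarrow> bool" and xs :: "'a list"
    and r \<alpha> s t :: nat and z :: 'a
  assumes P: "is_path V A xs" and len: "length xs = r + 1"
    and zV: "z \<in> V" and znot: "z \<notin> set xs"
    and dom1: "\<forall>i. \<alpha> < i \<and> i \<le> r \<longrightarrow> A (xs ! i) z"
    and dom2: "\<forall>i. i \<le> \<alpha> \<longrightarrow> A z (xs ! i)"
    and arc: "A (xs ! s) (xs ! t)"
    and s: "\<alpha> \<le> s" and t: "t \<le> r"
    and ij: "i < \<alpha>" "s + 1 \<le> j" "j < t"
    and aij: "A (xs ! i) (xs ! j)"
    and alt: "j = s + 1 \<or> A (xs ! (t - 1)) (xs ! (s + 1))"
  shows "\<exists>ys. is_path V A ys \<and> length ys = r + 2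
                     \<and> hd ys = xs ! 0 \<and> last ys = xs ! r
                     \<and> set ys = insert z (set xs)"
proof -
  define a where "a = take (i+1) xs"
  define b where "b = drop j (take t xs)"
  define q where "q = drop (s+1) (take j xs)"
  define c where "c = drop (i+1) (take (s+1) xs)"
  define d where "d = drop t xs"
  define ys where "ys = a @ b @ q @ [z] @ c @ d"
  have chx: "ch A xs" using P unfolding is_path_def ch_iff by blast
  have dx: "distinct xs" using P unfolding is_path_def by blast
  have sV: "set xs \<subseteq> V" using P unfolding is_path_def by blast
  have xs_eq: "xs = a @ c @ q @ b @ d"
  proof -
    have "take (s+1) xs = a @ c" unfolding a_def c_def using ij s by (intro split_take) simp
    moreover have "take j xs = take (s+1) xs @ q" unfolding q_def using ij by (intro split_take) simp
    moreover have "take t xs = take j xs @ b" unfolding b_def using ij by (intro split_take) simp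
    ultimately show ?thesis unfolding d_def by (metis append_assoc append_take_drop_id)
  qed
  have ms: "mset ys = mset (z # xs)"
  proof -
    have "mset xs = mset (a @ c @ q @ b @ d)" using xs_eq by simp
    then show ?thesis unfolding ys_def by (simp add: ac_simps)
  qed
  have setys: "set ys = insert z (set xs)"
    by (metis ms mset_eq_setD list.set(2))
  have dys: "distinct ys"
    using ms mset_eq_imp_distinct_iff dx znot by (metis distinct.simps(2))
  have lenys: "length ys = r + 2" 
  proof -
    have "length ys = length (z # xs)" by (metis ms size_mset)
    then show ?thesis using len by simp
  qed
  have an: "a \<noteq> []" "hd a = xs ! 0" "last a = xs ! i"
  proof -
    have il: "i < length xs" using ij s t len by simp
    show "a \<noteq> []" unfolding a_def using il by (cases xs) auto
    show "hd a = xs ! 0" unfolding a_def using il by (cases xs) auto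
    show "last a = xs ! i" unfolding a_def using il by (subst last_conv_nth) (auto simp: take_eq_Nil)
  qed
  have bn: "b \<noteq> []" "hd b = xs ! j" "last b = xs ! (t - 1)"
    unfolding b_def using ij s t len seg_hd[of j t xs] seg_last[of j t xs] by auto
  have cn: "c \<noteq> []" "hd c = xs ! (i+1)" "last c = xs ! s"
    unfolding c_def using ij s t len seg_hd[of "i+1" "s+1" xs] seg_last[of "i+1" "s+1" xs] by auto
  have dn: "d \<noteq> []" "hd d = xs ! t" "last d = xs ! r"
    unfolding d_def using ij s t len by (auto simp: hd_drop_conv_nth last_drop last_conv_nth)
  have chs: "ch A a" "ch A b" "ch A q" "ch A c" "ch A d"
    unfolding a_def b_def q_def c_def d_def using chx ch_seg ch_take ch_drop by auto
  have A1: "A (xs ! i) (xs ! j)" by (rule aij)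
  have A2: "A (xs ! (t-1)) z" using dom1[rule_format, of "t-1"] ij s t by linarith
  have A3: "A z (xs ! (i+1))" using dom2 ij by auto
  have A4: "A (xs ! s) (xs ! t)" by (rule arc)
  have chys: "ch A ys"
  proof (cases "j = s + 1")
    case True
    then have "q = []" unfolding q_def by simp
    then show ?thesis unfolding ys_def using chs an bn cn dn A1 A2 A3 A4
      by (simp add: ch_append ch_Cons)
  next
    case False
    then have jj: "s + 1 < j" using ij by simp
    have qn: "q \<noteq> []" "hd q = xs ! (s+1)" "last q = xs ! (j - 1)"
      unfolding q_def using jj ij t len seg_hd[of "s+1" j xs] seg_last[of "s+1" j xs] by auto
    have A5: "A (xs ! (t-1)) (xs ! (s+1))" using alt False by simp
    have A6: "A (xs ! (j-1)) z" using dom1[rule_format, of "j-1"] jj s ij t by linarith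
    show ?thesis unfolding ys_def using chs an bn cn dn qn A1 A3 A4 A5 A6
      by (simp add: ch_append ch_Cons)
  qed
  have "is_path V A ys"
    unfolding is_path_def using dys setys sV zV chys ch_iff[of A ys] an(1) unfolding ys_def
    by auto
  moreover have "hd ys = xs ! 0" unfolding ys_def using an by simp
  moreover have "last ys = xs ! r" unfolding ys_def using dn by simp
  ultimately show ?thesis using lenys setys by blast
qed

theorem lemma3p4:
  fixes V :: "'a set" and A :: "'a \<Rightarrow> 'a \<Rightarrow> bool" and xs :: "'a list"
    and r \<alpha> s t :: nat and z :: 'a
  assumes T: "tournament V A"
    and P: "is_path V A xs" and len: "length xs = r + 1"
    and zV: "z \<in> V" and znot: "z \<notin> set xs"
    and dom1: "\<forall>i. \<alpha> < i \<and> i \<le> r \<longrightarrow> A (xs ! i) z"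
    and dom2: "\<forall>i. i \<le> \<alpha> \<longrightarrow> A z (xs ! i)"
    and alpha: "2 \<le> \<alpha>" "\<alpha> + 3 \<le> r"
    and nopath: "\<not> (\<exists>ys. is_path V A ys \<and> length ys = r + 2
                     \<and> hd ys = xs ! 0 \<and> last ys = xs ! r
                     \<and> set ys = insert z (set xs))"
    and arc: "A (xs ! s) (xs ! t)"
    and s: "\<alpha> \<le> s" "s + 2 \<le> r"
    and t: "s + 2 \<le> t" "t \<le> r"
  shows "\<forall>i j. i < \<alpha> \<and> s + 1 \<le> j \<and> j \<le> s + (t - s) div 2
                 \<longrightarrow> \<not> A (xs ! i) (xs ! j)"
proof -
  have dx: "distinct xs" and sV: "set xs \<subseteq> V" using P unfolding is_path_def by auto
  have main: "\<And>s t. t - s = n \<Longrightarrow> A (xs ! s) (xs ! t) \<Longrightarrow> \<alpha> \<le> s \<Longrightarrow> s + 2 \<le> t \<Longrightarrow> t \<le> r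
     \<Longrightarrow> \<forall>i j. i < \<alpha> \<and> s + 1 \<le> j \<and> j \<le> s + (t - s) div 2 \<longrightarrow> \<not> A (xs ! i) (xs ! j)" for n
  proof (induction n rule: less_induct)
    case (less n s t)
    show ?case
    proof (intro allI impI)
      fix i j assume h: "i < \<alpha> \<and> s + 1 \<le> j \<and> j \<le> s + (t - s) div 2"
      show "\<not> A (xs ! i) (xs ! j)"
      proof
        assume aij: "A (xs ! i) (xs ! j)"
        have jt: "j < t" using h less.prems by linarith
        show False
        proof (cases "j = s + 1 \<or> A (xs ! (t - 1)) (xs ! (s + 1))")
          case True
          then show False using construct[OF P len zV znot dom1 dom2 less.prems(2,3,5), of i j]
            h jt aij nopath by blast
        next
          case False
          then have j2: "s + 2 \<le> j" and na: "\<not> A (xs ! (t - 1)) (xs ! (s + 1))" using h by auto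
          have t4: "s + 4 \<le> t" using j2 h by linarith
          have neq: "xs ! (s+1) \<noteq> xs ! (t-1)" using dx len t4 less.prems
            by (simp add: nth_eq_iff_index_eq)
          have inV: "xs ! (s+1) \<in> V" "xs ! (t-1) \<in> V" using sV len t4 less.prems
            by (auto intro!: subsetD[OF sV] nth_mem)
          have arc2: "A (xs ! (s+1)) (xs ! (t-1))"
            using T na neq inV unfolding tournament_def by blast
          have IH: "\<forall>i j. i < \<alpha> \<and> (s+1) + 1 \<le> j \<and> j \<le> (s+1) + ((t-1) - (s+1)) div 2
                  \<longrightarrow> \<not> A (xs ! i) (xs ! j)"
            apply (rule less.IH)
            using arc2 less.prems t4 by auto
          have "j \<le> (s+1) + ((t-1) - (s+1)) div 2" using h t4 by linarith
          have "i < \<alpha> \<and> (s+1) + 1 \<le> j \<and> j \<le> (s+1) + ((t-1) - (s+1)) div 2"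
            using h j2 \<open>j \<le> (s+1) + ((t-1) - (s+1)) div 2\<close> by simp
          then show False using IH aij by blast
        qed
      qed
    qed
  qed
  show ?thesis using main[OF refl arc s(1) t] .
qed

end
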